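(* Let $k\ge 2$ be an integer and let $F$ be a graph with chromatic number $\chi(F)=k+1$. For every $\varepsilon>0$ there exists $n_0$ such that every $F$-free graph $G$ on $n\ge n_0$ vertices with $m$ edges satisfies \[ \sum_{v\in V(G)} d^2(v)\le 2\left(1-\frac{1}{k}+\varepsilon\right)mn. \] Moreover, $\sum_{v} d^2(v)=2(1-\frac1k)mn$ holds when $k=2$ and $G$ is a complete bipartite graph, and when $k\ge3$ and $G=T_{n,k}$ with $k$ dividing $n$.
   Context: All graphs are finite and simple; $d(v)$ is the degree of vertex $v$. A graph is $F$-free if it contains no subgraph isomorphic to $F$. $T_{n,k}$ is the complete $k$-partite graph on $n$ vertices with part sizes differing by at most one. *)

theory Defs
  imports Complex_Main
begin

definition graph :: "'a set \<Rightarrow> ('a \<Rightarrow> 'a \<Rightarrow> bool) \<Rightarrow> bool" where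
  "graph V E \<longleftrightarrow> finite V \<and> (\<forall>u v. E u v \<longrightarrow> u \<in> V \<and> v \<in> V)
     \<and> (\<forall>u v. E u v \<longrightarrow> E v u) \<and> (\<forall>v. \<not> E v v)"

definition degree :: "'a set \<Rightarrow> ('a \<Rightarrow> 'a \<Rightarrow> bool) \<Rightarrow> 'a \<Rightarrow> nat" where
  "degree V E v = card {u \<in> V. E v u}"

definition num_edges :: "('a \<Rightarrow> 'a \<Rightarrow> bool) \<Rightarrow> nat" where
  "num_edges E = card {{u, v} | u v. E u v}"

definition contains_subgraph ::
  "'b set \<Rightarrow> ('b \<Rightarrow> 'b \<Rightarrow> bool) \<Rightarrow> 'a set \<Rightarrow> ('a \<Rightarrow> 'a \<Rightarrow> bool) \<Rightarrow> bool" where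
  "contains_subgraph VG EG VF EF \<longleftrightarrow>
     (\<exists>f. inj_on f VF \<and> f ` VF \<subseteq> VG \<and> (\<forall>u\<in>VF. \<forall>v\<in>VF. EF u v \<longrightarrow> EG (f u) (f v)))"

definition F_free ::
  "'a set \<Rightarrow> ('a \<Rightarrow> 'a \<Rightarrow> bool) \<Rightarrow> 'b set \<Rightarrow> ('b \<Rightarrow> 'b \<Rightarrow> bool) \<Rightarrow> bool" where
  "F_free VF EF VG EG \<longleftrightarrow> \<not> contains_subgraph VG EG VF EF"

definition colorable :: "'a set \<Rightarrow> ('a \<Rightarrow> 'a \<Rightarrow> bool) \<Rightarrow> nat \<Rightarrow> bool" where
  "colorable V E k \<longleftrightarrow> (\<exists>c :: 'a \<Rightarrow> nat. (\<forall>v\<in>V. c v < k) \<and> (\<forall>u\<in>V. \<forall>v\<in>V. E u v \<longrightarrow> c u \<noteq> c v))"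

definition chromatic_number :: "'a set \<Rightarrow> ('a \<Rightarrow> 'a \<Rightarrow> bool) \<Rightarrow> nat" where
  "chromatic_number V E = (LEAST k. colorable V E k)"

definition complete_bipartite :: "'a set \<Rightarrow> ('a \<Rightarrow> 'a \<Rightarrow> bool) \<Rightarrow> bool" where
  "complete_bipartite V E \<longleftrightarrow> (\<exists>A B. A \<union> B = V \<and> A \<inter> B = {} \<and>
     (\<forall>u v. E u v \<longleftrightarrow> (u \<in> A \<and> v \<in> B) \<or> (u \<in> B \<and> v \<in> A)))"

definition is_turan_graph :: "'a set \<Rightarrow> ('a \<Rightarrow> 'a \<Rightarrow> bool) \<Rightarrow> nat \<Rightarrow> bool" where
  "is_turan_graph V E k \<longleftrightarrow> (\<exists>p :: 'a \<Rightarrow> nat. (\<forall>v\<in>V. p v < k) \<and>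
     (\<forall>i<k. \<forall>j<k. card {v\<in>V. p v = i} \<le> card {v\<in>V. p v = j} + 1) \<and>
     (\<forall>u v. E u v \<longleftrightarrow> u \<in> V \<and> v \<in> V \<and> p u \<noteq> p v))"

definition sum_sq_deg :: "'a set \<Rightarrow> ('a \<Rightarrow> 'a \<Rightarrow> bool) \<Rightarrow> nat" where
  "sum_sq_deg V E = (\<Sum>v\<in>V. (degree V E v)^2)"

end

theory Submission
  imports Defs
begin

definition nb :: "'v set \<Rightarrow> ('v \<Rightarrow> 'v \<Rightarrow> bool) \<Rightarrow> 'v \<Rightarrow> 'v set" where
  "nb U E v = {u\<in>U. E v u}"

definition copies :: "('v \<Rightarrow> 'v \<Rightarrow> bool) \<Rightarrow> 'v set \<Rightarrow> nat \<Rightarrow> nat \<Rightarrow> 'v set list set" where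
  "copies E U p T = {Ps. length Ps = p \<and> (\<forall>i<p. Ps!i \<subseteq> U \<and> card (Ps!i) = T) \<and>
      (\<forall>i<p. \<forall>i'<p. i \<noteq> i' \<longrightarrow> (\<forall>x\<in>Ps!i. \<forall>y\<in>Ps!i'. E x y))}"

lemma double_count:
  assumes "finite A" "finite B"
  shows "(\<Sum>x\<in>A. card {y\<in>B. R x y}) = (\<Sum>y\<in>B. card {x\<in>A. R x y})"
  using sum.swap_restrict[OF assms, of "\<lambda>_ _. (1::nat)" R] by simp

lemma copies_sub: "copies E U p T \<subseteq> {xs. set xs \<subseteq> {B. B \<subseteq> U \<and> card B = T} \<and> length xs = p}"
  unfolding copies_def by (fastforce simp: in_set_conv_nth)

lemma finite_copies: "finite U \<Longrightarrow> finite (copies E U p T)"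
  by (rule finite_subset[OF copies_sub finite_lists_length_eq]) auto

lemma card_copies_le:
  assumes "finite U"
  shows "card (copies E U p T) \<le> card U ^ (p*T)"
proof -
  have "card (copies E U p T) \<le> card {xs. set xs \<subseteq> {B. B \<subseteq> U \<and> card B = T} \<and> length xs = p}"
    by (rule card_mono[OF finite_lists_length_eq copies_sub]) (use assms in auto)
  also have "\<dots> = (card U choose T) ^ p"
    using assms by (simp add: card_lists_length_eq n_subsets)
  also have "\<dots> \<le> (card U ^ T) ^ p"
  proof (cases "T \<le> card U")
    case True then show ?thesis by (intro power_mono binomial_le_pow) auto
  next
    case False then show ?thesis by (cases p) (simp_all add: binomial_eq_0)
  qed
  also have "\<dots> = card U ^ (p*T)" by (simp add: power_mult mult.commute)
  finally show ?thesis .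
qed

lemma copies_one: "copies E U 1 T = (\<lambda>B. [B]) ` {B. B \<subseteq> U \<and> card B = T}"
  unfolding copies_def by (auto simp: length_Suc_conv)

lemma base_count:
  assumes "finite U" "T \<ge> 1" "card U \<ge> T"
  shows "real (card (copies E U 1 T)) \<ge> (1 / real T ^ T) * real (card U) ^ (1*T)"
proof -
  have "card (copies E U 1 T) = card U choose T"
    unfolding copies_one using assms by (subst card_image) (auto simp: inj_on_def n_subsets)
  moreover have "(real (card U) / real T) ^ T \<le> real (card U choose T)"
    using binomial_ge_n_over_k_pow_k[OF assms(3)] by simp
  ultimately show ?thesis by (simp add: power_divide)
qed

lemma sum_nb_swap:
  assumes "finite U" "finite X" "\<forall>x y. E x y \<longrightarrow> E y x"
  shows "(\<Sum>v\<in>U. card (nb X E v)) = (\<Sum>u\<in>X. card (nb U E u))"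
proof -
  have "(\<Sum>v\<in>U. card {u\<in>X. E v u}) = (\<Sum>u\<in>X. card {v\<in>U. E v u})"
    by (rule double_count[OF assms(1,2)])
  also have "\<dots> = (\<Sum>u\<in>X. card {v\<in>U. E u v})"
    using assms(3) by (intro sum.cong refl arg_cong[where f=card]) blast
  finally show ?thesis by (simp add: nb_def)
qed

lemma card_nb_le: "finite X \<Longrightarrow> card (nb X E v) \<le> card X"
  unfolding nb_def by (rule card_mono) auto

lemma good_count:
  fixes \<delta> :: real
  assumes U: "finite U" and sym: "\<forall>x y. E x y \<longrightarrow> E y x"
    and q: "q \<ge> 1" and \<delta>: "\<delta> > 0" and T: "2 * real T \<le> \<delta> * real T0" "T \<ge> 1"
    and deg: "\<forall>v\<in>U. real (card (nb U E v)) \<ge> (1 - 1/real q + \<delta>) * real (card U)"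
    and Q: "Q \<in> copies E U q T0"
  shows "real (card {v\<in>U. \<forall>i<q. card (nb (Q!i) E v) \<ge> T}) \<ge> \<delta> * real (card U) / 2"
proof -
  define Good where "Good = {v\<in>U. \<forall>i<q. card (nb (Q!i) E v) \<ge> T}"
  define F where "F v = (\<Sum>i<q. card (nb (Q!i) E v))" for v
  define h where "h = card U"
  define g where "g = card Good"
  have Qi: "Q!i \<subseteq> U" "card (Q!i) = T0" "finite (Q!i)" if "i<q" for i
    using Q that U unfolding copies_def by (auto intro: finite_subset)
  have T0pos: "T0 \<ge> 1"
  proof (rule ccontr)
    assume "\<not> T0 \<ge> 1" then have "T0 = 0" by simp
    with T show False by simp
  qed
  have GU: "Good \<subseteq> U" unfolding Good_def by auto
  have fG: "finite Good" using GU U finite_subset by blast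
  have "(\<Sum>v\<in>U. F v) = (\<Sum>i<q. \<Sum>v\<in>U. card (nb (Q!i) E v))"
    unfolding F_def by (rule sum.swap)
  also have "\<dots> = (\<Sum>i<q. \<Sum>y\<in>Q!i. card (nb U E y))"
    by (rule sum.cong[OF refl], rule sum_nb_swap[OF U Qi(3) sym]) simp
  finally have eq1: "(\<Sum>v\<in>U. F v) = (\<Sum>i<q. \<Sum>y\<in>Q!i. card (nb U E y))" .
  have "real (\<Sum>i<q. \<Sum>y\<in>Q!i. card (nb U E y)) = (\<Sum>i<q. \<Sum>y\<in>Q!i. real (card (nb U E y)))"
    by simp
  also have "\<dots> \<ge> (\<Sum>i<q. \<Sum>y\<in>Q!i. (1 - 1/real q + \<delta>) * real h)"
    using deg Qi unfolding h_def by (intro sum_mono) (meson lessThan_iff subsetD)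
  finally have low: "real (\<Sum>v\<in>U. F v) \<ge> real q * real T0 * ((1 - 1/real q + \<delta>) * real h)"
    using Qi eq1 by simp
  have Fle: "F v \<le> q * T0" for v
  proof -
    have "F v \<le> (\<Sum>i<q. T0)" unfolding F_def
    proof (intro sum_mono)
      fix i assume "i \<in> {..<q}"
      then show "card (nb (Q!i) E v) \<le> T0" using card_nb_le[OF Qi(3), of i E v] Qi(2)[of i] by simp
    qed
    then show ?thesis by simp
  qed
  have Fle2: "F v \<le> (q - 1) * T0 + T" if vU: "v \<in> U" and vG: "v \<notin> Good" for v
  proof -
    obtain i0 where i0: "i0 < q" "card (nb (Q!i0) E v) < T"
      using vU vG by (auto simp: Good_def not_le)
    have "F v = card (nb (Q!i0) E v) + (\<Sum>i\<in>{..<q}-{i0}. card (nb (Q!i) E v))"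
      unfolding F_def using i0 by (subst sum.remove[of _ i0]) auto
    also have "\<dots> \<le> T + (\<Sum>i\<in>{..<q}-{i0}. T0)"
    proof (intro add_mono sum_mono)
      show "card (nb (Q!i0) E v) \<le> T" using i0 by simp
      fix i assume "i \<in> {..<q}-{i0}"
      then show "card (nb (Q!i) E v) \<le> T0" using card_nb_le[OF Qi(3), of i E v] Qi(2)[of i] by simp
    qed
    also have "\<dots> = T + (q - 1) * T0" using i0 by simp
    finally show ?thesis by simp
  qed
  have "(\<Sum>v\<in>U. F v) = (\<Sum>v\<in>Good. F v) + (\<Sum>v\<in>U-Good. F v)"
    using U GU by (metis sum.subset_diff add.commute)
  also have "\<dots> \<le> (\<Sum>v\<in>Good. q*T0) + (\<Sum>v\<in>U-Good. (q - 1) * T0 + T)"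
    using Fle Fle2 by (intro add_mono sum_mono) auto
  also have "\<dots> = g * (q*T0) + (h - g) * ((q-1)*T0 + T)"
    using U GU fG by (simp add: card_Diff_subset g_def h_def)
  finally have up: "(\<Sum>v\<in>U. F v) \<le> g * (q*T0) + (h - g) * ((q-1)*T0 + T)" .
  have gh: "g \<le> h" unfolding g_def h_def using GU U card_mono by blast
  have up': "real (\<Sum>v\<in>U. F v) \<le> real g * (real q * real T0) + (real h - real g) * ((real q - 1) * real T0 + real T)"
  proof -
    have "real (\<Sum>v\<in>U. F v) \<le> real (g * (q*T0) + (h - g) * ((q-1)*T0 + T))" using up by (simp only: of_nat_le_iff)
    also have "\<dots> = real g * (real q * real T0) + (real h - real g) * ((real q - 1) * real T0 + real T)"
      using gh q by (simp add: of_nat_diff)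
    finally show ?thesis .
  qed
  have "real q * real T0 * ((1 - 1/real q + \<delta>) * real h) \<le> real g * (real q * real T0) + (real h - real g) * ((real q - 1) * real T0 + real T)"
    using low up' by linarith
  moreover have "real q * real T0 * ((1 - 1/real q + \<delta>) * real h) = (real q - 1) * real T0 * real h + real q * \<delta> * real T0 * real h"
    using q by (simp add: field_simps)
  ultimately have "real q * \<delta> * real T0 * real h \<le> real h * real T + real g * (real T0 - real T)"
    by (simp add: algebra_simps)
  moreover have "\<delta> * real T0 * real h \<le> real q * \<delta> * real T0 * real h"
    using q \<delta> by (intro mult_right_mono) (auto intro: mult_right_mono)
  moreover have "real h * real T \<le> real h * (\<delta> * real T0 / 2)"
    using T by (intro mult_left_mono) auto
  moreover have "real g * (real T0 - real T) \<le> real g * real T0" by (simp add: mult_left_mono)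
  ultimately have "\<delta> * real T0 * real h \<le> real h * (\<delta> * real T0 / 2) + real g * real T0" by linarith
  then have "real T0 * (\<delta> * real h / 2) \<le> real T0 * real g" by (simp add: algebra_simps)
  then have "\<delta> * real h / 2 \<le> real g" using T0pos by simp
  then show ?thesis unfolding g_def h_def Good_def by simp
qed

lemma pigeon:
  fixes f :: "'a \<Rightarrow> 'b"
  assumes "finite A" "A \<noteq> {}" "f ` A \<subseteq> C" "finite C" "card C \<le> M"
  shows "\<exists>a\<in>A. real (card {x\<in>A. f x = f a}) * real M \<ge> real (card A)"
proof (rule ccontr)
  assume H: "\<not> ?thesis"
  have ne: "f ` A \<noteq> {}" using assms(2) by auto
  have "card A = (\<Sum>y\<in>f`A. card {x\<in>A. f x = y})"
    using sum.image_gen[OF assms(1), of "\<lambda>_. (1::nat)" f] by simp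
  then have "real (card A) * real M = (\<Sum>y\<in>f`A. real (card {x\<in>A. f x = y}) * real M)"
    by (simp add: sum_distrib_right)
  also have "\<dots> < (\<Sum>y\<in>f`A. real (card A))"
    using H ne assms(1) by (intro sum_strict_mono) auto
  also have "\<dots> = real (card (f`A)) * real (card A)" by simp
  also have "\<dots> \<le> real M * real (card A)"
    using card_mono[OF assms(4,3)] assms(5) by (intro mult_right_mono) auto
  finally show False by simp
qed

lemma ext_per_Q:
  fixes \<delta> :: real
  assumes U: "finite U" and sym: "\<forall>x y. E x y \<longrightarrow> E y x"
    and q: "q \<ge> 1" and \<delta>: "\<delta> > 0" and T: "2 * real T \<le> \<delta> * real T0" "T \<ge> 1"
    and deg: "\<forall>v\<in>U. real (card (nb U E v)) \<ge> (1 - 1/real q + \<delta>) * real (card U)"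
    and Q: "Q \<in> copies E U q T0"
    and hbig: "real (card U) \<ge> 2 * real ((2::nat)^(q*T0*q)) * real T / \<delta>"
  shows "real (card {P\<in>copies E U (Suc q) T. \<forall>i<q. P!(Suc i) \<subseteq> Q!i})
           \<ge> (\<delta> / (2 * real ((2::nat)^(q*T0*q)) * real T))^T * real (card U)^T"
proof -
  define M :: nat where "M = 2^(q*T0*q)"
  define h where "h = card U"
  define Good where "Good = {v\<in>U. \<forall>i<q. card (nb (Q!i) E v) \<ge> T}"
  have Mpos: "M \<ge> 1" unfolding M_def by simp
  have Qi: "Q!i \<subseteq> U" "card (Q!i) = T0" "finite (Q!i)" if "i<q" for i
    using Q that U unfolding copies_def by (auto intro: finite_subset)
  have Qc: "\<forall>x\<in>Q!i. \<forall>y\<in>Q!i'. E x y" if "i<q" "i'<q" "i\<noteq>i'" for i i'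
    using Q that unfolding copies_def by auto
  have lenQ: "length Q = q" using Q unfolding copies_def by auto
  have gc: "real (card Good) \<ge> \<delta> * real h / 2"
    unfolding Good_def h_def by (rule good_count[OF U sym q \<delta> T deg Q])
  have GU: "Good \<subseteq> U" unfolding Good_def by auto
  have fG: "finite Good" using GU U finite_subset by blast
  define ch where "ch v = map (\<lambda>i. SOME B. B \<subseteq> nb (Q!i) E v \<and> card B = T) [0..<q]" for v
  have chprop: "ch v ! i \<subseteq> nb (Q!i) E v \<and> card (ch v ! i) = T" if "v \<in> Good" "i < q" for v i
  proof -
    have "T \<le> card (nb (Q!i) E v)" using that unfolding Good_def by auto
    then obtain B where "B \<subseteq> nb (Q!i) E v" "card B = T" using obtain_subset_with_card_n by metis
    then have ex: "\<exists>B. B \<subseteq> nb (Q!i) E v \<and> card B = T" by blast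
    have "ch v ! i = (SOME B. B \<subseteq> nb (Q!i) E v \<and> card B = T)" unfolding ch_def using that(2) by simp
    then show ?thesis using someI_ex[OF ex] by simp
  qed
  have lench: "length (ch v) = q" for v unfolding ch_def by simp
  define W where "W = (\<Union>i<q. Q!i)"
  have fW: "finite W" unfolding W_def using Qi by auto
  have cW: "card W \<le> q * T0"
  proof -
    have "card W \<le> (\<Sum>i<q. card (Q!i))" unfolding W_def by (rule card_UN_le) simp
    also have "\<dots> = q * T0" using Qi by simp
    finally show ?thesis .
  qed
  define Cs where "Cs = {xs. set xs \<subseteq> Pow W \<and> length xs = q}"
  have fCs: "finite Cs" unfolding Cs_def using fW by (simp add: finite_lists_length_eq)
  have cCs: "card Cs \<le> M"
  proof -
    have "card Cs = (2 ^ card W) ^ q" unfolding Cs_def using fW by (simp add: card_lists_length_eq card_Pow)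
    also have "\<dots> \<le> (2 ^ (q*T0)) ^ q" using cW by (intro power_mono) auto
    also have "\<dots> = M" unfolding M_def by (simp add: power_mult)
    finally show ?thesis .
  qed
  have chCs: "ch ` Good \<subseteq> Cs"
  proof
    fix xs assume "xs \<in> ch ` Good"
    then obtain v where v: "v \<in> Good" "xs = ch v" by auto
    have "xs ! i \<subseteq> W" if "i < q" for i
      using chprop[OF v(1) that] that unfolding v(2) W_def nb_def by auto
    then show "xs \<in> Cs" unfolding Cs_def using lench v(2) by (fastforce simp: in_set_conv_nth)
  qed
  have hpos: "real h > 0"
  proof -
    have "2 * real M * real T / \<delta> > 0" using Mpos T \<delta> by simp
    then show ?thesis using hbig unfolding h_def M_def by linarith
  qed
  have "\<delta> * real h > 0" using hpos \<delta> by simp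
  then have Gne: "Good \<noteq> {}" using gc by auto
  obtain v0 where v0: "v0 \<in> Good" and fib: "real (card {v\<in>Good. ch v = ch v0}) * real M \<ge> real (card Good)"
    using pigeon[OF fG Gne chCs fCs cCs] by blast
  define s where "s = ch v0"
  define Z0 where "Z0 = {v\<in>Good. ch v = s}"
  have fZ0: "finite Z0" unfolding Z0_def using fG by simp
  have z_low: "real (card Z0) \<ge> \<delta> * real h / (2 * real M)"
  proof -
    have "real (card Z0) * real M \<ge> \<delta> * real h / 2" using fib gc unfolding Z0_def s_def by linarith
    then show ?thesis using Mpos by (simp add: field_simps)
  qed
  have zT: "real (card Z0) \<ge> real T"
  proof -
    have "\<delta> * real h / (2 * real M) \<ge> \<delta> * (2 * real M * real T / \<delta>) / (2 * real M)"
      using hbig \<delta> Mpos unfolding h_def M_def by (intro divide_right_mono mult_left_mono) auto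
    also have "\<delta> * (2 * real M * real T / \<delta>) / (2 * real M) = real T" using \<delta> Mpos by (simp add: field_simps)
    finally show ?thesis using z_low by linarith
  qed
  have lens: "length s = q" unfolding s_def by (simp add: lench)
  have sprop: "s ! i \<subseteq> Q!i \<and> card (s!i) = T" if "i < q" for i
    using chprop[OF v0 that] unfolding s_def nb_def by auto
  have sadj: "\<forall>u\<in>s!i. E z u" if "z \<in> Z0" "i < q" for z i
  proof -
    have "ch z = s" "z \<in> Good" using that unfolding Z0_def by auto
    then show ?thesis using chprop[of z i] that(2) unfolding nb_def by auto
  qed
  define Tgt where "Tgt = {P\<in>copies E U (Suc q) T. \<forall>i<q. P!(Suc i) \<subseteq> Q!i}"
  have fTgt: "finite Tgt" unfolding Tgt_def using finite_copies[OF U] by simp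
  have mapin: "(\<lambda>Z. Z # s) ` {Z. Z \<subseteq> Z0 \<and> card Z = T} \<subseteq> Tgt"
  proof
    fix P assume "P \<in> (\<lambda>Z. Z # s) ` {Z. Z \<subseteq> Z0 \<and> card Z = T}"
    then obtain Z where Z: "Z \<subseteq> Z0" "card Z = T" "P = Z # s" by auto
    have Z0U: "Z0 \<subseteq> U" unfolding Z0_def using GU by auto
    have parts: "P!i \<subseteq> U \<and> card (P!i) = T" if "i < Suc q" for i
    proof (cases i)
      case 0 then show ?thesis using Z Z0U by auto
    next
      case (Suc j) then show ?thesis using Z sprop[of j] Qi[of j] that by auto
    qed
    have compl: "\<forall>x\<in>P!i. \<forall>y\<in>P!i'. E x y" if ii: "i < Suc q" "i' < Suc q" "i \<noteq> i'" for i i'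
    proof (cases i)
      case 0
      then obtain j' where j': "i' = Suc j'" using ii by (cases i') auto
      then show ?thesis using 0 Z sadj[of _ j'] ii by auto
    next
      case (Suc j)
      show ?thesis
      proof (cases i')
        case 0 then show ?thesis using Suc Z sadj[of _ j] ii sym by auto
      next
        case (Suc j')
        then show ?thesis using \<open>i = Suc j\<close> Z ii sprop[of j] sprop[of j'] Qc[of j j'] by auto blast
      qed
    qed
    have "P \<in> copies E U (Suc q) T" unfolding copies_def using parts compl Z lens by auto
    moreover have "\<forall>i<q. P!(Suc i) \<subseteq> Q!i" using Z sprop by auto
    ultimately show "P \<in> Tgt" unfolding Tgt_def by auto
  qed
  have "card Z0 choose T = card {Z. Z \<subseteq> Z0 \<and> card Z = T}" using n_subsets[OF fZ0] by simp
  also have "\<dots> = card ((\<lambda>Z. Z # s) ` {Z. Z \<subseteq> Z0 \<and> card Z = T})"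
    by (rule card_image[symmetric]) (auto simp: inj_on_def)
  also have "\<dots> \<le> card Tgt" by (rule card_mono[OF fTgt mapin])
  finally have c1: "card Z0 choose T \<le> card Tgt" .
  have "(real (card Z0) / real T) ^ T \<le> real (card Z0 choose T)"
    by (rule binomial_ge_n_over_k_pow_k) (use zT in simp)
  moreover have "(\<delta> * real h / (2 * real M) / real T) ^ T \<le> (real (card Z0) / real T) ^ T"
    using z_low T \<delta> hpos Mpos by (intro power_mono divide_right_mono) auto
  ultimately have "(\<delta> * real h / (2 * real M) / real T) ^ T \<le> real (card Tgt)"
    using c1 by (meson of_nat_le_iff order_trans)
  moreover have "\<delta> * real h / (2 * real M) / real T = (\<delta> / (2 * real M * real T)) * real h"
    by (simp add: field_simps)
  ultimately have "((\<delta> / (2 * real M * real T)) * real h) ^ T \<le> real (card Tgt)" by simp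
  then show ?thesis unfolding Tgt_def h_def M_def by (simp only: power_mult_distrib)
qed

lemma back_count:
  assumes U: "finite U" and P: "P \<in> copies E U (Suc q) T" and TT: "T \<le> T0"
  shows "card {Q\<in>copies E U q T0. \<forall>i<q. P!(Suc i) \<subseteq> Q!i} \<le> card U ^ (q*(T0-T))"
proof -
  define A where "A = {Q\<in>copies E U q T0. \<forall>i<q. P!(Suc i) \<subseteq> Q!i}"
  define f where "f Q = map (\<lambda>i. Q!i - P!(Suc i)) [0..<q]" for Q
  define L where "L = {xs. set xs \<subseteq> {B. B \<subseteq> U \<and> card B = T0-T} \<and> length xs = q}"
  have Pi: "P!(Suc i) \<subseteq> U" "card (P!(Suc i)) = T" if "i < q" for i
    using P that unfolding copies_def by auto
  have inj: "inj_on f A"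
  proof (rule inj_onI)
    fix Q1 Q2 assume Q1: "Q1 \<in> A" and Q2: "Q2 \<in> A" and eq: "f Q1 = f Q2"
    have l: "length Q1 = q" "length Q2 = q" using Q1 Q2 unfolding A_def copies_def by auto
    show "Q1 = Q2"
    proof (rule nth_equalityI)
      show "length Q1 = length Q2" using l by simp
      fix i assume "i < length Q1"
      then have i: "i < q" using l by simp
      have "Q1!i - P!(Suc i) = Q2!i - P!(Suc i)"
        using eq i unfolding f_def by (metis (no_types, lifting) add_0 diff_zero length_map length_upt nth_map nth_upt)
      moreover have "P!(Suc i) \<subseteq> Q1!i" "P!(Suc i) \<subseteq> Q2!i" using Q1 Q2 i unfolding A_def by auto
      ultimately show "Q1!i = Q2!i" by blast
    qed
  qed
  have img: "f ` A \<subseteq> L"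
  proof
    fix xs assume "xs \<in> f ` A"
    then obtain Q where Q: "Q \<in> A" "xs = f Q" by auto
    have "xs!i \<subseteq> U \<and> card (xs!i) = T0 - T" if "i < q" for i
    proof -
      have "Q!i \<subseteq> U" "card (Q!i) = T0" "P!(Suc i) \<subseteq> Q!i" using Q that unfolding A_def copies_def by auto
      moreover have "finite (P!(Suc i))" using Pi[OF that] U finite_subset by blast
      ultimately show ?thesis using Q(2) that Pi[OF that] unfolding f_def by (auto simp: card_Diff_subset)
    qed
    then show "xs \<in> L" unfolding L_def using Q(2) unfolding f_def by (fastforce simp: in_set_conv_nth)
  qed
  have "card A = card (f ` A)" using inj by (simp add: card_image)
  also have "\<dots> \<le> card L" using img by (intro card_mono) (auto simp: L_def U finite_lists_length_eq)
  also have "\<dots> = (card U choose (T0-T))^q" unfolding L_def using U by (simp add: card_lists_length_eq n_subsets)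
  also have "\<dots> \<le> (card U ^ (T0-T))^q"
  proof (cases "T0 - T \<le> card U")
    case True then show ?thesis by (intro power_mono binomial_le_pow) auto
  next
    case False then show ?thesis by (cases q) (simp_all add: binomial_eq_0)
  qed
  also have "\<dots> = card U ^ (q*(T0-T))" by (metis power_mult mult.commute)
  finally show ?thesis unfolding A_def .
qed

lemma extend_fixed:
  fixes \<delta> c :: real
  assumes U: "finite U" and sym: "\<forall>x y. E x y \<longrightarrow> E y x"
    and q: "q \<ge> 1" and \<delta>: "\<delta> > 0" and T: "2 * real T \<le> \<delta> * real T0" "T \<ge> 1" and TT: "T \<le> T0"
    and deg: "\<forall>v\<in>U. real (card (nb U E v)) \<ge> (1 - 1/real q + \<delta>) * real (card U)"
    and hbig: "real (card U) \<ge> 2 * real ((2::nat)^(q*T0*q)) * real T / \<delta>"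
    and c: "c > 0"
    and cnt: "real (card (copies E U q T0)) \<ge> c * real (card U) ^ (q*T0)"
  shows "real (card (copies E U (Suc q) T))
           \<ge> c * (\<delta> / (2 * real ((2::nat)^(q*T0*q)) * real T))^T * real (card U)^(Suc q * T)"
proof -
  define c2 where "c2 = (\<delta> / (2 * real ((2::nat)^(q*T0*q)) * real T))^T"
  define h where "h = real (card U)"
  define Cq where "Cq = copies E U q T0"
  define Cp where "Cp = copies E U (Suc q) T"
  define R where "R Q P = (\<forall>i<q. P!(Suc i) \<subseteq> Q!i)" for Q P :: "'a set list"
  have fq: "finite Cq" "finite Cp" unfolding Cq_def Cp_def using finite_copies[OF U] by auto
  have hpos: "h > 0"
  proof -
    have "2 * real ((2::nat)^(q*T0*q)) * real T / \<delta> > 0" using T \<delta> by simp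
    then show ?thesis using hbig unfolding h_def by linarith
  qed
  have c2pos: "c2 \<ge> 0" unfolding c2_def using \<delta> by simp
  have eq: "(\<Sum>Q\<in>Cq. card {P\<in>Cp. R Q P}) = (\<Sum>P\<in>Cp. card {Q\<in>Cq. R Q P})"
    by (rule double_count[OF fq])
  have "real (\<Sum>Q\<in>Cq. card {P\<in>Cp. R Q P}) = (\<Sum>Q\<in>Cq. real (card {P\<in>Cp. R Q P}))" by simp
  also have "\<dots> \<ge> (\<Sum>Q\<in>Cq. c2 * h^T)"
    using ext_per_Q[OF U sym q \<delta> T deg _ hbig] unfolding Cq_def Cp_def R_def c2_def h_def
    by (intro sum_mono) auto
  finally have lo: "real (\<Sum>Q\<in>Cq. card {P\<in>Cp. R Q P}) \<ge> real (card Cq) * (c2 * h^T)" by simp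
  have "real (\<Sum>P\<in>Cp. card {Q\<in>Cq. R Q P}) = (\<Sum>P\<in>Cp. real (card {Q\<in>Cq. R Q P}))" by simp
  also have "\<dots> \<le> (\<Sum>P\<in>Cp. h ^ (q*(T0-T)))"
  proof (intro sum_mono)
    fix P assume "P \<in> Cp"
    then have "card {Q\<in>Cq. R Q P} \<le> card U ^ (q*(T0-T))"
      using back_count[OF U _ TT] unfolding Cp_def Cq_def R_def by blast
    then show "real (card {Q\<in>Cq. R Q P}) \<le> h ^ (q*(T0-T))" unfolding h_def
      by (metis of_nat_le_iff of_nat_power)
  qed
  finally have hi: "real (\<Sum>P\<in>Cp. card {Q\<in>Cq. R Q P}) \<le> real (card Cp) * h ^ (q*(T0-T))" by simp
  have "c * h^(q*T0) * (c2 * h^T) \<le> real (card Cq) * (c2 * h^T)"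
    using cnt c2pos hpos unfolding Cq_def h_def by (intro mult_right_mono) auto
  then have key: "c * h^(q*T0) * (c2 * h^T) \<le> real (card Cp) * h ^ (q*(T0-T))"
    using lo hi eq by linarith
  have ex: "q*T0 + T = q*(T0-T) + Suc q * T" using TT by (simp add: algebra_simps diff_mult_distrib2)
  have "c * h^(q*T0) * (c2 * h^T) = (c * c2 * h^(Suc q * T)) * h ^ (q*(T0-T))"
  proof -
    have "c * h^(q*T0) * (c2 * h^T) = c * c2 * h^(q*T0 + T)" by (simp add: power_add)
    also have "\<dots> = c * c2 * (h^(q*(T0-T)) * h^(Suc q * T))" by (simp only: ex power_add)
    finally show ?thesis by (simp add: mult_ac)
  qed
  with key have "(c * c2 * h^(Suc q * T)) * h ^ (q*(T0-T)) \<le> real (card Cp) * h ^ (q*(T0-T))" by simp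
  then have "c * c2 * h^(Suc q * T) \<le> real (card Cp)" using hpos by simp
  then show ?thesis unfolding c2_def h_def Cp_def by simp
qed

lemma choose_T0:
  fixes \<delta> :: real assumes "\<delta> > 0"
  shows "\<exists>T0. T \<le> T0 \<and> 2 * real T \<le> \<delta> * real T0"
proof -
  define T0 where "T0 = nat \<lceil>2 * real T / \<delta>\<rceil> + T"
  have "2 * real T / \<delta> \<le> real T0" unfolding T0_def by linarith
  then have "2 * real T \<le> \<delta> * real T0" using assms by (simp add: field_simps)
  moreover have "T \<le> T0" unfolding T0_def by simp
  ultimately show ?thesis by blast
qed

lemma ES:
  assumes "p \<ge> 1"
  shows "\<forall>\<delta>>0. \<forall>T\<ge>1. \<exists>c>0. \<exists>h0::real. \<forall>(U::'v set) E. finite U \<and> (\<forall>x y. E x y \<longrightarrow> E y x) \<and> real (card U) \<ge> h0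
     \<and> (\<forall>v\<in>U. real (card (nb U E v)) \<ge> (1 - 1/real p + \<delta>) * real (card U))
     \<longrightarrow> real (card (copies E U (Suc p) T)) \<ge> c * real (card U) ^ (Suc p * T)"
  using assms
proof (induction p rule: nat_induct_at_least)
  case base
  show ?case
  proof (intro allI impI)
    fix \<delta> :: real and T :: nat assume \<delta>: "\<delta> > 0" and T: "T \<ge> 1"
    obtain T0 where T0: "T \<le> T0" "2 * real T \<le> \<delta> * real T0" using choose_T0[OF \<delta>] by blast
    have T0p: "T0 \<ge> 1" using T T0 by simp
    define c where "c = 1 / real T0 ^ T0"
    have cpos: "c > 0" unfolding c_def using T0p by simp
    define h0 where "h0 = max (real T0) (2 * real ((2::nat)^(1*T0*1)) * real T / \<delta>)"
    define c' where "c' = c * (\<delta> / (2 * real ((2::nat)^(1*T0*1)) * real T))^T"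
    have c'pos: "c' > 0" unfolding c'_def using cpos \<delta> T by simp
    have main: "\<forall>(U::'v set) E. finite U \<and> (\<forall>x y. E x y \<longrightarrow> E y x) \<and> real (card U) \<ge> h0
     \<and> (\<forall>v\<in>U. real (card (nb U E v)) \<ge> (1 - 1/real (1::nat) + \<delta>) * real (card U))
     \<longrightarrow> real (card (copies E U (Suc 1) T)) \<ge> c' * real (card U) ^ (Suc 1 * T)"
    proof (intro allI impI)
      fix U :: "'v set" and E
      assume H: "finite U \<and> (\<forall>x y. E x y \<longrightarrow> E y x) \<and> real (card U) \<ge> h0
     \<and> (\<forall>v\<in>U. real (card (nb U E v)) \<ge> (1 - 1/real (1::nat) + \<delta>) * real (card U))"
      have cnt: "real (card (copies E U 1 T0)) \<ge> c * real (card U) ^ (1*T0)"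
        unfolding c_def using base_count[of U T0 E] H T0p unfolding h0_def by simp
      show "real (card (copies E U (Suc 1) T)) \<ge> c' * real (card U) ^ (Suc 1 * T)"
        unfolding c'_def by (rule extend_fixed[of U E 1 \<delta> T T0 c]) (use H T0 T \<delta> cpos cnt in \<open>auto simp: h0_def\<close>)
    qed
    show "\<exists>c>0. \<exists>h0::real. \<forall>(U::'v set) E. finite U \<and> (\<forall>x y. E x y \<longrightarrow> E y x) \<and> real (card U) \<ge> h0
     \<and> (\<forall>v\<in>U. real (card (nb U E v)) \<ge> (1 - 1/real (1::nat) + \<delta>) * real (card U))
     \<longrightarrow> real (card (copies E U (Suc 1) T)) \<ge> c * real (card U) ^ (Suc 1 * T)"
      using main c'pos by blast
  qed
next
  case (Suc p)
  show ?case
  proof (intro allI impI)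
    fix \<delta> :: real and T :: nat assume \<delta>: "\<delta> > 0" and T: "T \<ge> 1"
    obtain T0 where T0: "T \<le> T0" "2 * real T \<le> \<delta> * real T0" using choose_T0[OF \<delta>] by blast
    have T0p: "T0 \<ge> 1" using T T0 by simp
    obtain c h1 where cpos: "c > 0" and IH: "\<forall>(U::'v set) E. finite U \<and> (\<forall>x y. E x y \<longrightarrow> E y x) \<and> real (card U) \<ge> h1
     \<and> (\<forall>v\<in>U. real (card (nb U E v)) \<ge> (1 - 1/real p + \<delta>) * real (card U))
     \<longrightarrow> real (card (copies E U (Suc p) T0)) \<ge> c * real (card U) ^ (Suc p * T0)"
      using Suc.IH \<delta> T0p by blast
    define q where "q = Suc p"
    define h0 where "h0 = max h1 (2 * real ((2::nat)^(q*T0*q)) * real T / \<delta>)"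
    have ple: "1 / real (Suc p) \<le> 1 / real p" using Suc.hyps by (simp add: frac_le)
    define c' where "c' = c * (\<delta> / (2 * real ((2::nat)^(q*T0*q)) * real T))^T"
    have c'pos: "c' > 0" unfolding c'_def using cpos \<delta> T by simp
    have main: "\<forall>(U::'v set) E. finite U \<and> (\<forall>x y. E x y \<longrightarrow> E y x) \<and> real (card U) \<ge> h0
     \<and> (\<forall>v\<in>U. real (card (nb U E v)) \<ge> (1 - 1/real (Suc p) + \<delta>) * real (card U))
     \<longrightarrow> real (card (copies E U (Suc (Suc p)) T)) \<ge> c' * real (card U) ^ (Suc (Suc p) * T)"
    proof (intro allI impI)
      fix U :: "'v set" and E
      assume H: "finite U \<and> (\<forall>x y. E x y \<longrightarrow> E y x) \<and> real (card U) \<ge> h0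
     \<and> (\<forall>v\<in>U. real (card (nb U E v)) \<ge> (1 - 1/real (Suc p) + \<delta>) * real (card U))"
      have deg': "\<forall>v\<in>U. real (card (nb U E v)) \<ge> (1 - 1/real p + \<delta>) * real (card U)"
      proof
        fix v assume "v \<in> U"
        then have "real (card (nb U E v)) \<ge> (1 - 1/real (Suc p) + \<delta>) * real (card U)" using H by blast
        moreover have "(1 - 1/real p + \<delta>) * real (card U) \<le> (1 - 1/real (Suc p) + \<delta>) * real (card U)"
          using ple by (intro mult_right_mono) auto
        ultimately show "real (card (nb U E v)) \<ge> (1 - 1/real p + \<delta>) * real (card U)" by linarith
      qed
      have cnt: "real (card (copies E U q T0)) \<ge> c * real (card U) ^ (q*T0)"
        using IH H deg' unfolding q_def h0_def by auto
      have degq: "\<forall>v\<in>U. real (card (nb U E v)) \<ge> (1 - 1/real q + \<delta>) * real (card U)"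
        using H unfolding q_def by blast
      have "real (card (copies E U (Suc q) T)) \<ge> c' * real (card U) ^ (Suc q * T)"
        unfolding c'_def by (rule extend_fixed[of U E q \<delta> T T0 c]) (use H T0 T \<delta> cpos cnt degq in \<open>auto simp: h0_def q_def\<close>)
      then show "real (card (copies E U (Suc (Suc p)) T)) \<ge> c' * real (card U) ^ (Suc (Suc p) * T)"
        unfolding q_def .
    qed
    show "\<exists>c>0. \<exists>h0::real. \<forall>(U::'v set) E. finite U \<and> (\<forall>x y. E x y \<longrightarrow> E y x) \<and> real (card U) \<ge> h0
     \<and> (\<forall>v\<in>U. real (card (nb U E v)) \<ge> (1 - 1/real (Suc p) + \<delta>) * real (card U))
     \<longrightarrow> real (card (copies E U (Suc (Suc p)) T)) \<ge> c * real (card U) ^ (Suc (Suc p) * T)"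
      using main c'pos by blast
  qed
qed

definition E2 :: "'v set \<Rightarrow> ('v \<Rightarrow> 'v \<Rightarrow> bool) \<Rightarrow> nat" where
  "E2 U E = (\<Sum>v\<in>U. card (nb U E v))"

lemma E2_le_sq: "finite U \<Longrightarrow> E2 U E \<le> card U ^ 2"
proof -
  assume f: "finite U"
  have "E2 U E \<le> (\<Sum>v\<in>U. card U)" unfolding E2_def by (intro sum_mono card_nb_le f)
  then show ?thesis by (simp add: power2_eq_square)
qed

lemma E2_remove:
  assumes U: "finite U" and x: "x \<in> U" and sym: "\<forall>a b. E a b \<longrightarrow> E b a" and irr: "\<forall>a. \<not> E a a"
  shows "E2 (U - {x}) E + 2 * card (nb U E x) = E2 U E"
proof -
  have fU: "finite (U - {x})" using U by simp
  have split: "card (nb U E v) = card (nb (U - {x}) E v) + (if E v x then 1 else 0)" if "v \<in> U - {x}" for v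
  proof (cases "E v x")
    case True
    have "nb U E v = insert x (nb (U - {x}) E v)" using True x unfolding nb_def by auto
    moreover have "x \<notin> nb (U - {x}) E v" unfolding nb_def by auto
    moreover have "finite (nb (U - {x}) E v)" using U unfolding nb_def by simp
    ultimately show ?thesis using True by simp
  next
    case False
    then have "nb U E v = nb (U - {x}) E v" unfolding nb_def by auto
    then show ?thesis using False by simp
  qed
  have "E2 U E = card (nb U E x) + (\<Sum>v\<in>U - {x}. card (nb U E v))"
    unfolding E2_def using U x by (simp add: sum.remove)
  also have "(\<Sum>v\<in>U - {x}. card (nb U E v)) = (\<Sum>v\<in>U - {x}. card (nb (U - {x}) E v)) + (\<Sum>v\<in>U - {x}. (if E v x then 1 else 0))"
    using split by (simp add: sum.distrib)
  also have "(\<Sum>v\<in>U - {x}. (if E v x then 1 else 0::nat)) = card {v\<in>U - {x}. E v x}"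
    using fU by (simp add: sum.If_cases Int_def conj_commute)
  also have "{v\<in>U - {x}. E v x} = nb U E x" unfolding nb_def using sym irr by blast
  finally show ?thesis unfolding E2_def by simp
qed

lemma core:
  fixes \<beta> :: real
  assumes "\<beta> \<le> 1" "finite U" and sym: "\<forall>a b. E a b \<longrightarrow> E b a" and irr: "\<forall>a. \<not> E a a"
  shows "\<exists>U'\<subseteq>U. (\<forall>v\<in>U'. real (card (nb U' E v)) \<ge> \<beta> * real (card U')) \<and>
     real (E2 U' E) - \<beta> * real (card U')^2 \<ge> real (E2 U E) - \<beta> * real (card U)^2 - (real (card U) - real (card U'))"
  using assms(2)
proof (induction "card U" arbitrary: U rule: less_induct)
  case less
  show ?case
  proof (cases "\<forall>v\<in>U. real (card (nb U E v)) \<ge> \<beta> * real (card U)")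
    case True
    then show ?thesis by (intro exI[of _ U]) auto
  next
    case False
    then obtain x where x: "x \<in> U" "real (card (nb U E x)) < \<beta> * real (card U)" by (auto simp: not_le)
    define U1 where "U1 = U - {x}"
    have fU1: "finite U1" unfolding U1_def using less.prems by simp
    have cpos: "card U > 0" using x less.prems card_gt_0_iff by blast
    have cU1e: "card U1 = card U - 1" unfolding U1_def using x less.prems by (simp add: card_Diff_singleton)
    have cU1: "card U1 < card U" using cU1e cpos by simp
    have cU1': "real (card U1) = real (card U) - 1" using cU1e cpos by (simp add: of_nat_diff)
    obtain U' where U': "U' \<subseteq> U1" "\<forall>v\<in>U'. real (card (nb U' E v)) \<ge> \<beta> * real (card U')"
      "real (E2 U' E) - \<beta> * real (card U')^2 \<ge> real (E2 U1 E) - \<beta> * real (card U1)^2 - (real (card U1) - real (card U'))"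
      using less.hyps[OF cU1 fU1] by blast
    have e: "real (E2 U1 E) = real (E2 U E) - 2 * real (card (nb U E x))"
      using E2_remove[OF less.prems x(1) sym irr] unfolding U1_def by linarith
    have "real (E2 U1 E) - \<beta> * real (card U1)^2 \<ge> real (E2 U E) - \<beta> * real (card U)^2 - 1"
    proof -
      have "real (E2 U1 E) - \<beta> * real (card U1)^2 = real (E2 U E) - 2 * real (card (nb U E x)) - \<beta> * (real (card U) - 1)^2"
        using e cU1' by simp
      also have "\<dots> = real (E2 U E) - \<beta> * real (card U)^2 - 2 * real (card (nb U E x)) + 2 * \<beta> * real (card U) - \<beta>"
        by (simp add: power2_eq_square algebra_simps)
      finally show ?thesis using x(2) assms(1) by linarith
    qed
    then show ?thesis using U' cU1' unfolding U1_def by (intro exI[of _ U']) auto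
  qed
qed

lemma core_big:
  fixes \<alpha> \<delta> :: real
  assumes "\<alpha> \<ge> 0" "\<delta> > 0" "\<delta> \<le> 1" "\<alpha> + \<delta>/2 \<le> 1" "finite U" and sym: "\<forall>a b. E a b \<longrightarrow> E b a" and irr: "\<forall>a. \<not> E a a"
    and dense: "real (E2 U E) \<ge> (\<alpha> + \<delta>) * real (card U)^2" and big: "real (card U) \<ge> 4 / \<delta>"
  shows "\<exists>U'\<subseteq>U. (\<forall>v\<in>U'. real (card (nb U' E v)) \<ge> (\<alpha> + \<delta>/2) * real (card U')) \<and> real (card U') \<ge> \<delta>/4 * real (card U)"
proof -
  obtain U' where U': "U' \<subseteq> U" "\<forall>v\<in>U'. real (card (nb U' E v)) \<ge> (\<alpha> + \<delta>/2) * real (card U')"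
     "real (E2 U' E) - (\<alpha> + \<delta>/2) * real (card U')^2 \<ge> real (E2 U E) - (\<alpha> + \<delta>/2) * real (card U)^2 - (real (card U) - real (card U'))"
    using core[OF assms(4,5) sym irr] by blast
  define u where "u = real (card U)"
  define u' where "u' = real (card U')"
  have fU': "finite U'" using U'(1) assms(5) finite_subset by blast
  have "real (E2 U' E) \<le> u'^2" unfolding u'_def using E2_le_sq[OF fU', of E] by (metis of_nat_le_iff of_nat_power)
  have u'0: "u' \<ge> 0" unfolding u'_def by simp
  have "u \<le> \<delta>/4 * u^2"
  proof -
    have "u * 1 \<le> u * (\<delta>/4 * u)" using big assms(2) unfolding u_def
      by (intro mult_left_mono) (auto simp: field_simps)
    then show ?thesis by (simp add: power2_eq_square mult_ac)
  qed
  have "(\<alpha> + \<delta>/2) * u'^2 \<ge> 0" using assms(1,2) by simp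
  have "u'^2 \<ge> \<delta>/4 * u^2"
    using U'(3) dense \<open>real (E2 U' E) \<le> u'^2\<close> \<open>u \<le> \<delta>/4 * u^2\<close> \<open>(\<alpha> + \<delta>/2) * u'^2 \<ge> 0\<close> u'0
    unfolding u_def[symmetric] u'_def[symmetric] by (simp add: algebra_simps) 
  show ?thesis
  proof (intro exI[of _ U'] conjI U'(1) U'(2))
    show "real (card U') \<ge> \<delta>/4 * real (card U)"
    proof (rule ccontr)
      assume "\<not> ?thesis"
      then have "u' < \<delta>/4 * u" unfolding u_def u'_def by simp
      then have "u'^2 < (\<delta>/4 * u)^2" using u'0 by (intro power_strict_mono) auto
      also have "\<dots> = (\<delta>/4) * (\<delta>/4 * u^2)" by (simp add: power2_eq_square)
      also have "\<dots> \<le> 1 * (\<delta>/4 * u^2)" using assms(2,3) by (intro mult_right_mono) auto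
      finally show False using \<open>u'^2 \<ge> \<delta>/4 * u^2\<close> by simp
    qed
  qed
qed

lemma card_filter_sum: "finite A \<Longrightarrow> card {x\<in>A. P x} = (\<Sum>x\<in>A. if P x then 1 else (0::nat))"
  by (simp add: sum.If_cases Int_def conj_commute)

lemma sum_nb_if: "finite V \<Longrightarrow> (\<Sum>u\<in>nb V E v. f u) = (\<Sum>u\<in>V. if E v u then f u else (0::'b::comm_monoid_add))"
  unfolding nb_def by (simp add: sum.inter_filter)

lemma sum_over_nb:
  fixes f :: "'v \<Rightarrow> nat"
  assumes V: "finite V" and sym: "\<forall>a b. E a b \<longrightarrow> E b a"
  shows "(\<Sum>v\<in>V. \<Sum>u\<in>nb V E v. f u) = (\<Sum>u\<in>V. card (nb V E u) * f u)"
proof -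
  have "(\<Sum>v\<in>V. \<Sum>u\<in>nb V E v. f u) = (\<Sum>v\<in>V. \<Sum>u\<in>V. if E v u then f u else 0)"
    by (intro sum.cong refl sum_nb_if[OF V])
  also have "\<dots> = (\<Sum>u\<in>V. \<Sum>v\<in>V. if E v u then f u else 0)" by (rule sum.swap)
  also have "\<dots> = (\<Sum>u\<in>V. card (nb V E u) * f u)"
  proof (rule sum.cong[OF refl])
    fix u assume "u \<in> V"
    have "(\<Sum>v\<in>V. if E v u then f u else 0) = (\<Sum>v\<in>V. (if E v u then 1 else 0) * f u)"
      by (intro sum.cong) auto
    also have "\<dots> = card {v\<in>V. E v u} * f u" using card_filter_sum[OF V] by (simp add: sum_distrib_right)
    also have "{v\<in>V. E v u} = nb V E u" unfolding nb_def using sym by blast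
    finally show "(\<Sum>v\<in>V. if E v u then f u else 0) = card (nb V E u) * f u" .
  qed
  finally show ?thesis .
qed

lemma two_S:
  assumes V: "finite V" and sym: "\<forall>a b. E a b \<longrightarrow> E b a"
  shows "2 * (\<Sum>v\<in>V. card (nb V E v) ^ 2) = (\<Sum>v\<in>V. \<Sum>u\<in>nb V E v. card (nb V E u) + card (nb V E v))"
proof -
  have a: "(\<Sum>v\<in>V. \<Sum>u\<in>nb V E v. card (nb V E u)) = (\<Sum>v\<in>V. card (nb V E v) ^ 2)"
    using sum_over_nb[OF V sym, of "\<lambda>u. card (nb V E u)"] by (simp add: power2_eq_square)
  have b: "(\<Sum>v\<in>V. \<Sum>u\<in>nb V E v. card (nb V E v)) = (\<Sum>v\<in>V. card (nb V E v) ^ 2)"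
    by (simp add: power2_eq_square)
  show ?thesis using a b by (simp add: sum.distrib)
qed

lemma deg_sum_le:
  assumes V: "finite V" and u: "u \<in> V" and v: "v \<in> V"
  shows "card (nb V E u) + card (nb V E v) \<le> card V + card (nb V E u \<inter> nb V E v)"
proof -
  have f: "finite (nb V E u)" "finite (nb V E v)" using V unfolding nb_def by auto
  have "card (nb V E u) + card (nb V E v) = card (nb V E u \<union> nb V E v) + card (nb V E u \<inter> nb V E v)"
    using card_Un_Int[OF f] .
  moreover have "card (nb V E u \<union> nb V E v) \<le> card V" using V by (intro card_mono) (auto simp: nb_def)
  ultimately show ?thesis by simp
qed

lemma codeg_sum:
  assumes V: "finite V" and sym: "\<forall>a b. E a b \<longrightarrow> E b a"
  shows "(\<Sum>v\<in>V. \<Sum>u\<in>nb V E v. card (nb V E u \<inter> nb V E v)) = (\<Sum>w\<in>V. E2 (nb V E w) E)"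
proof -
  define T where "T a b c = (if E a b \<and> E b c \<and> E a c then 1 else (0::nat))" for a b c
  have "(\<Sum>v\<in>V. \<Sum>u\<in>nb V E v. card (nb V E u \<inter> nb V E v)) = (\<Sum>v\<in>V. \<Sum>u\<in>V. \<Sum>x\<in>V. T v u x)"
  proof (rule sum.cong[OF refl])
    fix v assume "v \<in> V"
    have "(\<Sum>u\<in>nb V E v. card (nb V E u \<inter> nb V E v)) = (\<Sum>u\<in>V. if E v u then card (nb V E u \<inter> nb V E v) else 0)"
      by (rule sum_nb_if[OF V])
    also have "\<dots> = (\<Sum>u\<in>V. \<Sum>x\<in>V. T v u x)"
    proof (rule sum.cong[OF refl])
      fix u assume "u \<in> V"
      have "nb V E u \<inter> nb V E v = {x\<in>V. E u x \<and> E v x}" unfolding nb_def by auto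
      then show "(if E v u then card (nb V E u \<inter> nb V E v) else 0) = (\<Sum>x\<in>V. T v u x)"
        unfolding T_def using card_filter_sum[OF V] by auto
    qed
    finally show "(\<Sum>u\<in>nb V E v. card (nb V E u \<inter> nb V E v)) = (\<Sum>u\<in>V. \<Sum>x\<in>V. T v u x)" .
  qed
  also have "\<dots> = (\<Sum>v\<in>V. \<Sum>x\<in>V. \<Sum>u\<in>V. T v u x)" by (intro sum.cong refl sum.swap)
  also have "\<dots> = (\<Sum>x\<in>V. \<Sum>v\<in>V. \<Sum>u\<in>V. T v u x)" by (rule sum.swap)
  also have "\<dots> = (\<Sum>w\<in>V. E2 (nb V E w) E)"
  proof (rule sum.cong[OF refl])
    fix w assume "w \<in> V"
    have fn: "finite (nb V E w)" using V unfolding nb_def by simp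
    have "E2 (nb V E w) E = (\<Sum>v\<in>nb V E w. card (nb (nb V E w) E v))" unfolding E2_def ..
    also have "\<dots> = (\<Sum>v\<in>V. if E w v then card (nb (nb V E w) E v) else 0)"
      by (rule sum_nb_if[OF V])
    also have "\<dots> = (\<Sum>v\<in>V. \<Sum>u\<in>V. T v u w)"
    proof (rule sum.cong[OF refl])
      fix v assume "v \<in> V"
      have "nb (nb V E w) E v = {u\<in>V. E w u \<and> E v u}" unfolding nb_def by auto
      then have "card (nb (nb V E w) E v) = (\<Sum>u\<in>V. if E w u \<and> E v u then 1 else 0)"
        using card_filter_sum[OF V] by simp
      then show "(if E w v then card (nb (nb V E w) E v) else 0) = (\<Sum>u\<in>V. T v u w)"
      proof (cases "E w v")
        case True
        then show ?thesis unfolding T_def using sym \<open>card (nb (nb V E w) E v) = _\<close> by (auto intro!: sum.cong)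
      next
        case False
        then have "\<not> E v w" using sym by blast
        then show ?thesis unfolding T_def using False by simp
      qed
    qed
    finally show "(\<Sum>v\<in>V. \<Sum>u\<in>V. T v u w) = E2 (nb V E w) E" by simp
  qed
  finally show ?thesis .
qed

lemma E2_nb_le_sum:
  assumes V: "finite V"
  shows "E2 (nb V E w) E \<le> (\<Sum>v\<in>V. card (nb V E v))"
proof -
  have "E2 (nb V E w) E = (\<Sum>v\<in>nb V E w. card (nb (nb V E w) E v))" unfolding E2_def ..
  also have "\<dots> \<le> (\<Sum>v\<in>nb V E w. card (nb V E v))"
    using V by (intro sum_mono card_mono) (auto simp: nb_def)
  also have "\<dots> \<le> (\<Sum>v\<in>V. card (nb V E v))"
    using V by (intro sum_mono2) (auto simp: nb_def)
  finally show ?thesis .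
qed

lemma chain:
  assumes V: "finite V" and sym: "\<forall>a b. E a b \<longrightarrow> E b a"
  shows "2 * (\<Sum>v\<in>V. card (nb V E v) ^ 2) \<le> card V * (\<Sum>v\<in>V. card (nb V E v)) + (\<Sum>w\<in>V. E2 (nb V E w) E)"
proof -
  have "2 * (\<Sum>v\<in>V. card (nb V E v) ^ 2) = (\<Sum>v\<in>V. \<Sum>u\<in>nb V E v. card (nb V E u) + card (nb V E v))"
    by (rule two_S[OF V sym])
  also have "\<dots> \<le> (\<Sum>v\<in>V. \<Sum>u\<in>nb V E v. card V + card (nb V E u \<inter> nb V E v))"
    using deg_sum_le[OF V] by (intro sum_mono) (auto simp: nb_def)
  also have "\<dots> = (\<Sum>v\<in>V. card (nb V E v) * card V) + (\<Sum>v\<in>V. \<Sum>u\<in>nb V E v. card (nb V E u \<inter> nb V E v))"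
    by (simp add: sum.distrib)
  also have "\<dots> = card V * (\<Sum>v\<in>V. card (nb V E v)) + (\<Sum>w\<in>V. E2 (nb V E w) E)"
    using codeg_sum[OF V sym] by (simp add: sum_distrib_left mult.commute)
  finally show ?thesis .
qed

lemma add_part:
  assumes P: "P \<in> copies E V k t" and W: "W \<subseteq> V" "card W = t"
    and adj: "\<forall>w\<in>W. P \<in> copies E (nb V E w) k t" and sym: "\<forall>a b. E a b \<longrightarrow> E b a"
  shows "W # P \<in> copies E V (Suc k) t"
proof -
  have lenP: "length P = k" and Pi: "\<forall>i<k. P!i \<subseteq> V \<and> card (P!i) = t"
    and Pc: "\<forall>i<k. \<forall>i'<k. i \<noteq> i' \<longrightarrow> (\<forall>x\<in>P!i. \<forall>y\<in>P!i'. E x y)"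
    using P unfolding copies_def by auto
  have wadj: "E w y" if "w \<in> W" "i < k" "y \<in> P!i" for w i y
  proof -
    have "P!i \<subseteq> nb V E w" using adj that unfolding copies_def by auto
    then show ?thesis using that unfolding nb_def by auto
  qed
  have parts: "(W # P)!i \<subseteq> V \<and> card ((W # P)!i) = t" if "i < Suc k" for i
    using that W Pi by (cases i) auto
  have compl: "\<forall>x\<in>(W#P)!i. \<forall>y\<in>(W#P)!i'. E x y" if ii: "i < Suc k" "i' < Suc k" "i \<noteq> i'" for i i'
  proof (cases i)
    case 0
    then obtain j where "i' = Suc j" using ii by (cases i') auto
    then show ?thesis using 0 ii wadj by auto
  next
    case (Suc j)
    show ?thesis
    proof (cases i')
      case 0 then show ?thesis using Suc ii wadj sym by auto
    next
      case (Suc j') then show ?thesis using \<open>i = Suc j\<close> ii Pc by auto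
    qed
  qed
  show ?thesis unfolding copies_def using parts compl lenP by auto
qed

lemma copies_mono: "X \<subseteq> Y \<Longrightarrow> copies E X p T \<subseteq> copies E Y p T"
  unfolding copies_def by auto

lemma final_alg:
  fixes \<epsilon> \<delta> \<alpha> S n D :: real and k :: nat
  assumes k: "k \<ge> 2" and \<epsilon>: "\<epsilon> > 0" and \<delta>: "\<delta> = min (\<epsilon>/(3+\<epsilon>)) (1/real k)" and \<alpha>: "\<alpha> = 1 - 1/real (k-1)"
    and nD: "n * D \<ge> 0" and H: "(2 - \<alpha> - \<delta>) * S \<le> (1 + 2*\<delta>) * (n * D)"
  shows "S \<le> (1 - 1/real k + \<epsilon>) * n * D"
proof -
  define a where "a = 1 - 1/real k"
  have rk: "real (k-1) = real k - 1" using k by (simp add: of_nat_diff)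
  have k1: "real k - 1 \<ge> 1" using k by simp
  have two: "2 - \<alpha> = 1 + 1/(real k - 1)" using \<alpha> rk by simp
  have a2: "a * (2 - \<alpha>) = 1" unfolding a_def two using k1 by (simp add: field_simps)
  have ge1: "2 - \<alpha> \<ge> 1" using two k1 by simp
  have a1: "a \<le> 1" "a \<ge> 0" unfolding a_def using k by auto
  have dpos: "\<delta> > 0" using \<delta> \<epsilon> k by simp
  have d1: "\<delta> * (3 + \<epsilon>) \<le> \<epsilon>"
  proof -
    have "\<delta> \<le> \<epsilon>/(3+\<epsilon>)" using \<delta> by simp
    then show ?thesis using \<epsilon> by (simp add: field_simps)
  qed
  have dk0: "\<delta> \<le> 1/real k" using \<delta> by simp
  have "1/real k \<le> 1/2" using k by (simp add: field_simps)
  then have dk: "\<delta> \<le> 1/2" using dk0 by linarith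
  have pos: "2 - \<alpha> - \<delta> > 0" using ge1 dk by linarith
  have key: "1 + 2*\<delta> \<le> (a + \<epsilon>) * (2 - \<alpha> - \<delta>)"
  proof -
    have "(a + \<epsilon>) * (2 - \<alpha> - \<delta>) = a * (2 - \<alpha>) + \<epsilon> * (2 - \<alpha>) - \<delta> * (a + \<epsilon>)" by (simp add: algebra_simps)
    also have "\<dots> = 1 + \<epsilon> * (2 - \<alpha>) - \<delta> * (a + \<epsilon>)" using a2 by simp
    finally have e: "(a + \<epsilon>) * (2 - \<alpha> - \<delta>) = 1 + \<epsilon> * (2 - \<alpha>) - \<delta> * (a + \<epsilon>)" .
    have "\<epsilon> * (2 - \<alpha>) \<ge> \<epsilon>" using ge1 \<epsilon> by simp
    moreover have "\<delta> * (a + \<epsilon>) \<le> \<delta> * (1 + \<epsilon>)" using a1 dpos by (intro mult_left_mono) auto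
    ultimately show ?thesis using e d1 by (simp add: algebra_simps) 
  qed
  have "(2 - \<alpha> - \<delta>) * S \<le> (a + \<epsilon>) * (2 - \<alpha> - \<delta>) * (n * D)"
    using H key nD by (meson mult_right_mono order_trans)
  then have "(2 - \<alpha> - \<delta>) * S \<le> (2 - \<alpha> - \<delta>) * ((a + \<epsilon>) * n * D)" by (simp add: mult_ac)
  then have "S \<le> (a + \<epsilon>) * n * D" using pos by simp
  then show ?thesis unfolding a_def .
qed

lemma bad_bound:
  fixes c \<delta> :: real and V :: "'v set"
  assumes V: "finite V" and sym: "\<forall>a b. E a b \<longrightarrow> E b a" and t: "t \<ge> 1"
    and free: "copies E V (Suc k) t = {}"
    and Bad: "Bad \<subseteq> V" and c: "c > 0" and npos: "card V > 0"
    and many: "\<forall>w\<in>Bad. real (card (copies E (nb V E w) k t)) \<ge> c * real (card V) ^ (k*t)"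
  shows "real (card Bad) \<le> (real t - 1) / c"
proof -
  define n where "n = card V"
  define CV where "CV = copies E V k t"
  have fB: "finite Bad" using Bad V finite_subset by blast
  have fCV: "finite CV" unfolding CV_def using finite_copies[OF V] .
  have sub: "copies E (nb V E w) k t \<subseteq> CV" for w unfolding CV_def by (rule copies_mono) (auto simp: nb_def)
  have eq: "(\<Sum>w\<in>Bad. card {P\<in>CV. P \<in> copies E (nb V E w) k t}) = (\<Sum>P\<in>CV. card {w\<in>Bad. P \<in> copies E (nb V E w) k t})"
    by (rule double_count[OF fB fCV])
  have le: "card {w\<in>Bad. P \<in> copies E (nb V E w) k t} \<le> t - 1" if P: "P \<in> CV" for P
  proof (rule ccontr)
    assume "\<not> ?thesis"
    then have tl: "t \<le> card {w\<in>Bad. P \<in> copies E (nb V E w) k t}" by simp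
    obtain W where W: "W \<subseteq> {w\<in>Bad. P \<in> copies E (nb V E w) k t}" "card W = t" "finite W"
      by (rule obtain_subset_with_card_n[OF tl])
    have P': "P \<in> copies E V k t" using P unfolding CV_def .
    have WV: "W \<subseteq> V" using W(1) Bad by blast
    have adj: "\<forall>w\<in>W. P \<in> copies E (nb V E w) k t" using W(1) by blast
    have "W # P \<in> copies E V (Suc k) t"
      by (rule add_part[OF P' WV W(2) adj sym])
    then show False using free by simp
  qed
  have "(\<Sum>w\<in>Bad. c * real n ^ (k*t)) \<le> (\<Sum>w\<in>Bad. real (card {P\<in>CV. P \<in> copies E (nb V E w) k t}))"
  proof (rule sum_mono)
    fix w assume "w \<in> Bad"
    moreover have "{P\<in>CV. P \<in> copies E (nb V E w) k t} = copies E (nb V E w) k t" using sub by blast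
    ultimately show "c * real n ^ (k*t) \<le> real (card {P\<in>CV. P \<in> copies E (nb V E w) k t})" using many unfolding n_def by simp
  qed
  also have "\<dots> = real (\<Sum>w\<in>Bad. card {P\<in>CV. P \<in> copies E (nb V E w) k t})" by simp
  also have "\<dots> = real (\<Sum>P\<in>CV. card {w\<in>Bad. P \<in> copies E (nb V E w) k t})" using eq by simp
  also have "\<dots> \<le> real (\<Sum>P\<in>CV. t - 1)" using le by (intro of_nat_mono sum_mono) auto
  also have "\<dots> = real (card CV) * (real t - 1)" using t by (simp add: of_nat_diff)
  also have "\<dots> \<le> real n ^ (k*t) * (real t - 1)"
  proof -
    have "card CV \<le> n ^ (k*t)" unfolding CV_def n_def by (rule card_copies_le[OF V])
    then have "real (card CV) \<le> real n ^ (k*t)" by (metis of_nat_le_iff of_nat_power)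
    then show ?thesis using t by (intro mult_right_mono) auto
  qed
  finally have "real (card Bad) * c * real n ^ (k*t) \<le> (real t - 1) * real n ^ (k*t)" by (simp add: mult_ac)
  moreover have "real n ^ (k*t) > 0" using npos unfolding n_def by simp
  ultimately have "real (card Bad) * c \<le> real t - 1" by simp
  then show ?thesis using c by (simp add: field_simps)
qed

lemma main:
  fixes k t :: nat and \<epsilon> :: real
  assumes k: "k \<ge> 2" and t: "t \<ge> 1" and \<epsilon>: "\<epsilon> > 0"
  shows "\<exists>n0::nat. \<forall>(V::'v set) E. finite V \<and> (\<forall>a b. E a b \<longrightarrow> E b a) \<and> (\<forall>a. \<not> E a a) \<and> card V \<ge> n0
     \<and> copies E V (Suc k) t = {} \<longrightarrow>
     real (\<Sum>v\<in>V. card (nb V E v)^2) \<le> (1 - 1/real k + \<epsilon>) * real (card V) * real (\<Sum>v\<in>V. card (nb V E v))"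
proof -
  define p where "p = k - 1"
  have p: "p \<ge> 1" "Suc p = k" using k unfolding p_def by auto
  define \<alpha> where "\<alpha> = 1 - 1/real (k-1)"
  define \<delta> where "\<delta> = min (\<epsilon>/(3+\<epsilon>)) (1/real k)"
  have dpos: "\<delta> > 0" unfolding \<delta>_def using \<epsilon> k by simp
  have dk: "\<delta> \<le> 1/real k" unfolding \<delta>_def by simp
  have rk: "real (k-1) = real k - 1" using k by (simp add: of_nat_diff)
  have k1: "real k - 1 \<ge> 1" using k by simp
  have "1/real k \<le> 1/2" using k by (simp add: field_simps)
  then have d1: "\<delta> \<le> 1" using dk by linarith
  have a0: "\<alpha> \<ge> 0" unfolding \<alpha>_def rk using k1 by (simp add: field_simps)
  have "1/real k \<le> 1/(real k - 1)" using k1 by (simp add: frac_le)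
  then have ad: "\<alpha> + \<delta>/2 \<le> 1" unfolding \<alpha>_def rk using dk dpos by linarith
  have ap: "\<alpha> = 1 - 1/real p" unfolding \<alpha>_def p_def ..
  have d2: "\<delta>/2 > 0" using dpos by simp
  have e1: "\<forall>T\<ge>1. \<exists>c>0. \<exists>h0::real. \<forall>(U::'v set) E. finite U \<and> (\<forall>x y. E x y \<longrightarrow> E y x) \<and> real (card U) \<ge> h0
     \<and> (\<forall>v\<in>U. real (card (nb U E v)) \<ge> (1 - 1/real p + \<delta>/2) * real (card U))
     \<longrightarrow> real (card (copies E U (Suc p) T)) \<ge> c * real (card U) ^ (Suc p * T)"
    using mp[OF spec[OF ES[OF p(1)], of "\<delta>/2"] d2] .
  have e2: "\<exists>c>0. \<exists>h0::real. \<forall>(U::'v set) E. finite U \<and> (\<forall>x y. E x y \<longrightarrow> E y x) \<and> real (card U) \<ge> h0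
     \<and> (\<forall>v\<in>U. real (card (nb U E v)) \<ge> (1 - 1/real p + \<delta>/2) * real (card U))
     \<longrightarrow> real (card (copies E U (Suc p) t)) \<ge> c * real (card U) ^ (Suc p * t)"
    using mp[OF spec[OF e1, of t] t] .
  obtain c h0 where c: "c > 0" and ESp: "\<forall>(U::'v set) E. finite U \<and> (\<forall>x y. E x y \<longrightarrow> E y x) \<and> real (card U) \<ge> h0
     \<and> (\<forall>v\<in>U. real (card (nb U E v)) \<ge> (1 - 1/real p + \<delta>/2) * real (card U))
     \<longrightarrow> real (card (copies E U (Suc p) t)) \<ge> c * real (card U) ^ (Suc p * t)"
    using e2 by (elim exE conjE) (rule that; assumption)
  define c' where "c' = c * (\<delta>^2/4)^(k*t)"
  have c'pos: "c' > 0" unfolding c'_def using c dpos by simp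
  define B where "B = (real t - 1) / c'"
  define n0 where "n0 = nat \<lceil>max (max (B/\<delta>) (4/\<delta>^2)) (4*h0/\<delta>^2)\<rceil> + 1"
  show ?thesis
  proof (intro exI[of _ n0] allI impI)
    fix V :: "'v set" and E
    assume H: "finite V \<and> (\<forall>a b. E a b \<longrightarrow> E b a) \<and> (\<forall>a. \<not> E a a) \<and> card V \<ge> n0 \<and> copies E V (Suc k) t = {}"
    then have V: "finite V" and sym: "\<forall>a b. E a b \<longrightarrow> E b a" and irr: "\<forall>a. \<not> E a a" and n0le: "card V \<ge> n0"
      and free: "copies E V (Suc k) t = {}" by auto
    define n where "n = card V"
    have nn0: "real n \<ge> max (max (B/\<delta>) (4/\<delta>^2)) (4*h0/\<delta>^2)" using n0le unfolding n_def n0_def by linarith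
    then have nB: "real n \<ge> B/\<delta>" and n4: "real n \<ge> 4/\<delta>^2" and nh: "real n \<ge> 4*h0/\<delta>^2" by auto
    have npos: "card V > 0" using n0le unfolding n0_def by simp
    define d where "d w = card (nb V E w)" for w
    define D where "D = (\<Sum>v\<in>V. d v)"
    define S where "S = (\<Sum>v\<in>V. d v ^ 2)"
    define Bad where "Bad = {w\<in>V. real (d w) \<ge> \<delta> * real n \<and> real (E2 (nb V E w) E) > (\<alpha> + \<delta>) * real (d w)^2}"
    have many: "\<forall>w\<in>Bad. real (card (copies E (nb V E w) k t)) \<ge> c' * real (card V) ^ (k*t)"
    proof
      fix w assume w: "w \<in> Bad"
      define N where "N = nb V E w"
      have fN: "finite N" unfolding N_def nb_def using V by simp
      have dw: "real (card N) \<ge> \<delta> * real n" using w unfolding Bad_def N_def d_def by auto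
      have "\<delta> * real n \<ge> \<delta> * (4/\<delta>^2)" using n4 dpos by (intro mult_left_mono) auto
      moreover have "\<delta> * (4/\<delta>^2) = 4/\<delta>" using dpos by (simp add: power2_eq_square)
      ultimately have big: "real (card N) \<ge> 4/\<delta>" using dw by linarith
      have dense: "real (E2 N E) \<ge> (\<alpha> + \<delta>) * real (card N)^2" using w unfolding Bad_def N_def d_def by auto
      obtain U' where U': "U' \<subseteq> N" "\<forall>v\<in>U'. real (card (nb U' E v)) \<ge> (\<alpha> + \<delta>/2) * real (card U')"
        "real (card U') \<ge> \<delta>/4 * real (card N)"
        using core_big[OF a0 dpos d1 ad fN sym irr dense big] by blast
      have fU': "finite U'" using U'(1) fN finite_subset by blast
      have "\<delta>/4 * real (card N) \<ge> \<delta>/4 * (\<delta> * real n)" using dw dpos by (intro mult_left_mono) auto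
      then have U'n: "real (card U') \<ge> \<delta>^2/4 * real n" using U'(3) by (simp add: power2_eq_square)
      have "\<delta>^2/4 * real n \<ge> \<delta>^2/4 * (4*h0/\<delta>^2)" using nh dpos by (intro mult_left_mono) auto
      moreover have "\<delta>^2/4 * (4*h0/\<delta>^2) = h0" using dpos by (simp add: field_simps)
      ultimately have U'h: "real (card U') \<ge> h0" using U'n by linarith
      have "real (card (copies E U' (Suc p) t)) \<ge> c * real (card U') ^ (Suc p * t)"
        using ESp fU' sym U'h U'(2) unfolding ap by blast
      then have cU': "real (card (copies E U' k t)) \<ge> c * real (card U') ^ (k * t)" using p(2) by simp
      have "copies E U' k t \<subseteq> copies E N k t" using U'(1) by (rule copies_mono)
      then have "card (copies E U' k t) \<le> card (copies E N k t)" using finite_copies[OF fN] by (rule card_mono[rotated])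
      then have cN: "real (card (copies E N k t)) \<ge> c * real (card U') ^ (k * t)" using cU' by linarith
      have "real (card U') ^ (k*t) \<ge> (\<delta>^2/4 * real n) ^ (k*t)" using U'n dpos by (intro power_mono) auto
      then have "c * real (card U') ^ (k*t) \<ge> c * (\<delta>^2/4 * real n) ^ (k*t)" using c by simp
      moreover have "c * (\<delta>^2/4 * real n) ^ (k*t) = c' * real (card V) ^ (k*t)"
        unfolding c'_def n_def by (simp only: power_mult_distrib mult.assoc)
      ultimately show "real (card (copies E (nb V E w) k t)) \<ge> c' * real (card V) ^ (k*t)"
        using cN unfolding N_def by linarith
    qed
    have BadV: "Bad \<subseteq> V" unfolding Bad_def by auto
    have fBad: "finite Bad" using BadV V finite_subset by blast
    have bb: "real (card Bad) \<le> B"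
      unfolding B_def by (rule bad_bound[OF V sym t free BadV c'pos npos many])
    have perw: "real (E2 (nb V E w) E) \<le> \<delta> * real n * real (d w) + (\<alpha> + \<delta>) * real (d w)^2 + (if w \<in> Bad then real D else 0)"
      if wV: "w \<in> V" for w
    proof -
      have t1: "\<delta> * real n * real (d w) \<ge> 0" "(\<alpha> + \<delta>) * real (d w)^2 \<ge> 0" using dpos a0 by auto
      have fN: "finite (nb V E w)" unfolding nb_def using V by simp
      have sq: "real (E2 (nb V E w) E) \<le> real (d w)^2"
        using E2_le_sq[OF fN, of E] unfolding d_def by (metis of_nat_le_iff of_nat_power)
      show ?thesis
      proof (cases "w \<in> Bad")
        case True
        have "real (E2 (nb V E w) E) \<le> real D" using E2_nb_le_sum[OF V, of E w] unfolding D_def d_def by (metis of_nat_le_iff)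
        then show ?thesis using True t1 by simp
      next
        case False
        show ?thesis
        proof (cases "real (d w) \<ge> \<delta> * real n")
          case True
          then have "real (E2 (nb V E w) E) \<le> (\<alpha> + \<delta>) * real (d w)^2" using False wV unfolding Bad_def by auto
          then show ?thesis using False t1 by simp
        next
          case dl: False
          have "real (d w)^2 = real (d w) * real (d w)" by (simp add: power2_eq_square)
          also have "\<dots> \<le> (\<delta> * real n) * real (d w)" using dl by (intro mult_right_mono) auto
          finally have "real (d w)^2 \<le> \<delta> * real n * real (d w)" .
          moreover have "(if w \<in> Bad then real D else 0) = 0" using False by simp
          ultimately show ?thesis using sq t1 by linarith
        qed
      qed
    qed
    have "real (\<Sum>w\<in>V. E2 (nb V E w) E) = (\<Sum>w\<in>V. real (E2 (nb V E w) E))" by simp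
    also have "\<dots> \<le> (\<Sum>w\<in>V. \<delta> * real n * real (d w) + (\<alpha> + \<delta>) * real (d w)^2 + (if w \<in> Bad then real D else 0))"
      using perw by (intro sum_mono) auto
    also have "\<dots> = \<delta> * real n * real D + (\<alpha> + \<delta>) * real S + real (card Bad) * real D"
    proof -
      have "(\<Sum>w\<in>V. (if w \<in> Bad then real D else 0)) = real (card Bad) * real D"
      proof -
        have "V \<inter> Bad = Bad" using BadV by blast
        then show ?thesis using V by (simp add: sum.If_cases)
      qed
      then show ?thesis unfolding D_def S_def by (simp add: sum.distrib sum_distrib_left)
    qed
    finally have sE2: "real (\<Sum>w\<in>V. E2 (nb V E w) E) \<le> \<delta> * real n * real D + (\<alpha> + \<delta>) * real S + real (card Bad) * real D" .
    have ch: "2 * real S \<le> real n * real D + real (\<Sum>w\<in>V. E2 (nb V E w) E)"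
    proof -
      have "2 * S \<le> n * D + (\<Sum>w\<in>V. E2 (nb V E w) E)"
        using chain[OF V sym] unfolding S_def D_def d_def n_def .
      then show ?thesis by (metis of_nat_add of_nat_le_iff of_nat_mult of_nat_numeral)
    qed
    have "real (card Bad) * real D \<le> B * real D" using bb by (intro mult_right_mono) auto
    also have "\<dots> \<le> (\<delta> * real n) * real D"
    proof -
      have "B \<le> \<delta> * real n" using nB dpos by (simp add: field_simps)
      then show ?thesis by (intro mult_right_mono) auto
    qed
    finally have bD: "real (card Bad) * real D \<le> \<delta> * real n * real D" .
    have "(2 - \<alpha> - \<delta>) * real S \<le> (1 + 2*\<delta>) * (real n * real D)"
      using ch sE2 bD by (simp add: algebra_simps)
    then have "real S \<le> (1 - 1/real k + \<epsilon>) * real n * real D"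
      by (intro final_alg[OF k \<epsilon> \<delta>_def \<alpha>_def]) auto
    then show "real (\<Sum>v\<in>V. card (nb V E v)^2) \<le> (1 - 1/real k + \<epsilon>) * real (card V) * real (\<Sum>v\<in>V. card (nb V E v))"
      unfolding S_def D_def d_def n_def by simp
  qed
qed

lemma degree_nb: "degree V E v = card (nb V E v)"
  unfolding degree_def nb_def ..

lemma handshake:
  assumes g: "graph V E"
  shows "2 * num_edges E = (\<Sum>v\<in>V. degree V E v)"
proof -
  have V: "finite V" and inV: "\<forall>u v. E u v \<longrightarrow> u \<in> V \<and> v \<in> V" and sym: "\<forall>u v. E u v \<longrightarrow> E v u"
    and irr: "\<forall>v. \<not> E v v" using g unfolding graph_def by auto
  define D where "D = {(u,v). E u v}"
  define g where "g = (\<lambda>(u::'a,v). {u,v})"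
  have DS: "D = Sigma V (\<lambda>u. {v\<in>V. E u v})" unfolding D_def using inV by auto
  have fD: "finite D" unfolding DS using V by simp
  have cD: "card D = (\<Sum>v\<in>V. degree V E v)" unfolding DS degree_def using V by simp
  have NE: "{{u, v} | u v. E u v} = g ` D" unfolding D_def g_def by auto
  have "card D = (\<Sum>e\<in>g`D. card {x\<in>D. g x = e})"
    using sum.image_gen[OF fD, of "\<lambda>_. 1::nat" g] by simp
  also have "\<dots> = (\<Sum>e\<in>g`D. 2)"
  proof (rule sum.cong[OF refl])
    fix e assume "e \<in> g ` D"
    then obtain a b where ab: "E a b" "e = {a,b}" unfolding D_def g_def by auto
    have "a \<noteq> b" using ab irr by auto
    have "{x\<in>D. g x = e} = {(a,b),(b,a)}"
      using ab sym unfolding D_def g_def by (auto simp: doubleton_eq_iff)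
    then show "card {x\<in>D. g x = e} = 2" using \<open>a \<noteq> b\<close> by simp
  qed
  also have "\<dots> = 2 * card (g ` D)" by simp
  finally show ?thesis using cD NE unfolding num_edges_def by simp
qed

lemma colorable_ex:
  assumes g: "graph VF EF" and ch: "chromatic_number VF EF = k + 1"
  shows "colorable VF EF (k+1)"
proof -
  have V: "finite VF" and irr: "\<forall>v. \<not> EF v v" using g unfolding graph_def by auto
  obtain f :: "'a \<Rightarrow> nat" and n where f: "f ` VF = {i. i < n}" "inj_on f VF"
    using finite_imp_inj_to_nat_seg[OF V] by blast
  have "colorable VF EF n"
    unfolding colorable_def
  proof (intro exI[of _ f] conjI ballI impI)
    fix v assume "v \<in> VF" then show "f v < n" using f(1) by auto
  next
    fix u v assume "u \<in> VF" "v \<in> VF" "EF u v"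
    then show "f u \<noteq> f v" using f(2) irr by (metis inj_onD)
  qed
  then have "colorable VF EF (LEAST k. colorable VF EF k)" by (rule LeastI)
  then show ?thesis using ch unfolding chromatic_number_def by simp
qed

lemma embed:
  assumes g: "graph VF EF" and ch: "chromatic_number VF EF = k + 1" and gG: "graph V E"
    and P: "P \<in> copies E V (Suc k) (card VF)"
  shows "contains_subgraph V E VF EF"
proof -
  have VF: "finite VF" using g unfolding graph_def by auto
  have irr: "\<forall>v. \<not> E v v" using gG unfolding graph_def by auto
  obtain col :: "'a \<Rightarrow> nat" where col: "\<forall>v\<in>VF. col v < k+1" "\<forall>u\<in>VF. \<forall>v\<in>VF. EF u v \<longrightarrow> col u \<noteq> col v"
    using colorable_ex[OF g ch] unfolding colorable_def by blast
  have Pi: "P!i \<subseteq> V" "card (P!i) = card VF" if "i < Suc k" for i using P that unfolding copies_def by auto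
  have Pc: "\<forall>x\<in>P!i. \<forall>y\<in>P!i'. E x y" if "i < Suc k" "i' < Suc k" "i \<noteq> i'" for i i'
    using P that unfolding copies_def by auto
  define C where "C i = {v\<in>VF. col v = i}" for i
  have exg: "\<exists>h. h ` C i \<subseteq> P!i \<and> inj_on h (C i)" if "i < Suc k" for i
  proof -
    have Vfin: "finite V" using gG unfolding graph_def by auto
    have fP: "finite (P!i)" using Pi[OF that] Vfin finite_subset by blast
    have "card (C i) \<le> card (P!i)" using Pi[OF that] VF unfolding C_def by (simp add: card_mono)
    then show ?thesis using card_le_inj[of "C i" "P!i"] VF fP unfolding C_def by auto
  qed
  define gs where "gs i = (SOME h. h ` C i \<subseteq> P!i \<and> inj_on h (C i))" for i
  have gsp: "gs i ` C i \<subseteq> P!i \<and> inj_on (gs i) (C i)" if "i < Suc k" for i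
    unfolding gs_def using someI_ex[OF exg[OF that]] .
  define f where "f v = gs (col v) v" for v
  have fin: "f v \<in> P!(col v)" if "v \<in> VF" for v
    using gsp[of "col v"] col(1) that unfolding f_def C_def by auto
  show ?thesis unfolding contains_subgraph_def
  proof (intro exI[of _ f] conjI)
    show "inj_on f VF"
    proof (rule inj_onI)
      fix u v assume u: "u \<in> VF" and v: "v \<in> VF" and eq: "f u = f v"
      show "u = v"
      proof (cases "col u = col v")
        case True
        then have "u \<in> C (col u)" "v \<in> C (col u)" using u v unfolding C_def by auto
        moreover have "gs (col u) u = gs (col u) v" using eq True unfolding f_def by simp
        ultimately show ?thesis using gsp[of "col u"] col(1) u by (auto dest: inj_onD)
      next
        case False
        have "E (f u) (f v)" using Pc[of "col u" "col v"] fin u v col(1) False by auto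
        then show ?thesis using eq irr by simp
      qed
    qed
    show "f ` VF \<subseteq> V" using fin Pi col(1) by fastforce
    show "\<forall>u\<in>VF. \<forall>v\<in>VF. EF u v \<longrightarrow> E (f u) (f v)"
    proof (intro ballI impI)
      fix u v assume u: "u \<in> VF" and v: "v \<in> VF" and e: "EF u v"
      have "col u \<noteq> col v" using col(2) u v e by blast
      moreover have "col u < Suc k" "col v < Suc k" using col(1) u v by auto
      ultimately show "E (f u) (f v)" using Pc[of "col u" "col v"] fin[OF u] fin[OF v] by blast
    qed
  qed
qed

lemma bip_eq:
  assumes g: "graph V E" and cb: "complete_bipartite V E"
  shows "real (sum_sq_deg V E) = 2 * (1 - 1 / real (2::nat)) * real (num_edges E) * real (card V)"
proof -
  have V: "finite V" using g unfolding graph_def by auto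
  obtain A B where AB: "A \<union> B = V" "A \<inter> B = {}" "\<forall>u v. E u v \<longleftrightarrow> (u \<in> A \<and> v \<in> B) \<or> (u \<in> B \<and> v \<in> A)"
    using cb unfolding complete_bipartite_def by blast
  have fA: "finite A" and fB: "finite B" using AB(1) V by auto
  have dA: "degree V E v = card B" if "v \<in> A" for v
  proof -
    have "{u\<in>V. E v u} = B" using AB that by auto
    then show ?thesis unfolding degree_def by simp
  qed
  have dB: "degree V E v = card A" if "v \<in> B" for v
  proof -
    have "{u\<in>V. E v u} = A" using AB that by auto
    then show ?thesis unfolding degree_def by simp
  qed
  have s1: "sum_sq_deg V E = card A * card B ^ 2 + card B * card A ^ 2"
  proof -
    have "sum_sq_deg V E = (\<Sum>v\<in>A. degree V E v ^ 2) + (\<Sum>v\<in>B. degree V E v ^ 2)"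
      unfolding sum_sq_deg_def AB(1)[symmetric] using fA fB AB(2) by (rule sum.union_disjoint)
    also have "\<dots> = (\<Sum>v\<in>A. card B ^ 2) + (\<Sum>v\<in>B. card A ^ 2)" using dA dB by simp
    finally show ?thesis by simp
  qed
  have s2: "(\<Sum>v\<in>V. degree V E v) = 2 * (card A * card B)"
  proof -
    have "(\<Sum>v\<in>V. degree V E v) = (\<Sum>v\<in>A. degree V E v) + (\<Sum>v\<in>B. degree V E v)"
      unfolding AB(1)[symmetric] using fA fB AB(2) by (rule sum.union_disjoint)
    also have "\<dots> = (\<Sum>v\<in>A. card B) + (\<Sum>v\<in>B. card A)" using dA dB by simp
    finally show ?thesis by simp
  qed
  have m: "num_edges E = card A * card B" using handshake[OF g] s2 by simp
  have n: "card V = card A + card B" using AB fA fB card_Un_disjoint by metis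
  show ?thesis unfolding s1 m n by (simp add: power2_eq_square algebra_simps)
qed

lemma turan_eq:
  assumes g: "graph V E" and tg: "is_turan_graph V E k" and dv: "k dvd card V" and k: "k \<ge> 1"
  shows "real (sum_sq_deg V E) = 2 * (1 - 1 / real k) * real (num_edges E) * real (card V)"
proof -
  have V: "finite V" using g unfolding graph_def by auto
  obtain p :: "'a \<Rightarrow> nat" where p: "\<forall>v\<in>V. p v < k"
    "\<forall>i<k. \<forall>j<k. card {v\<in>V. p v = i} \<le> card {v\<in>V. p v = j} + 1"
    "\<forall>u v. E u v \<longleftrightarrow> u \<in> V \<and> v \<in> V \<and> p u \<noteq> p v"
    using tg unfolding is_turan_graph_def by blast
  define s where "s i = card {v\<in>V. p v = i}" for i
  define n where "n = card V"
  define q where "q = n div k"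
  have nq: "n = k * q" unfolding q_def using dv unfolding n_def by simp
  have Vun: "V = (\<Union>i\<in>{..<k}. {v\<in>V. p v = i})" using p(1) by auto
  have ns: "n = (\<Sum>i<k. s i)"
    unfolding n_def s_def by (subst Vun) (rule card_UN_disjoint, auto simp: V)
  have allq: "s i = q" if i: "i < k" for i
  proof (rule ccontr)
    assume ne: "s i \<noteq> q"
    show False
    proof (cases "s i > q")
      case True
      have "\<forall>j\<in>{..<k}. q \<le> s j" using p(2) i True unfolding s_def by fastforce
      then have "(\<Sum>j<k. q) < (\<Sum>j<k. s j)"
        using i True by (intro sum_strict_mono_ex1) auto
      then show False using ns nq by simp
    next
      case False
      then have lt: "s i < q" using ne by simp
      have "\<forall>j\<in>{..<k}. s j \<le> q" using p(2) i lt unfolding s_def by fastforce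
      then have "(\<Sum>j<k. s j) < (\<Sum>j<k. q)"
        using i lt by (intro sum_strict_mono_ex1) auto
      then show False using ns nq by simp
    qed
  qed
  have qn: "q \<le> n" using nq k by simp
  have deg: "degree V E v = n - q" if v: "v \<in> V" for v
  proof -
    have "{u\<in>V. E v u} = V - {u\<in>V. p u = p v}" using p(3) v by auto
    then have "degree V E v = card V - card {u\<in>V. p u = p v}"
      unfolding degree_def using V by (simp add: card_Diff_subset)
    then show ?thesis using allq[of "p v"] p(1) v unfolding s_def n_def by simp
  qed
  have s1: "sum_sq_deg V E = n * (n - q)^2" unfolding sum_sq_deg_def using deg by (simp add: n_def)
  have s2: "(\<Sum>v\<in>V. degree V E v) = n * (n - q)" using deg by (simp add: n_def)
  have m: "2 * real (num_edges E) = real n * real (n - q)"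
    using handshake[OF g] s2 by (metis of_nat_mult of_nat_numeral)
  have rq: "real q = real n / real k" using nq k by simp
  have key: "(1 - 1/real k) * real n = real (n - q)" using rq qn k by (simp add: of_nat_diff field_simps)
  have "2 * (1 - 1 / real k) * real (num_edges E) * real (card V) = (1 - 1/real k) * real n * (2 * real (num_edges E))"
    unfolding n_def by (simp add: mult_ac)
  also have "\<dots> = real (n - q) * (real n * real (n - q))" using key m by simp
  also have "\<dots> = real (sum_sq_deg V E)" unfolding s1 by (simp add: power2_eq_square)
  finally show ?thesis by simp
qed

theorem theorem2p14:
  fixes VF :: "'a set" and EF :: "'a \<Rightarrow> 'a \<Rightarrow> bool" and k :: nat
  assumes "k \<ge> 2" and "graph VF EF" and "chromatic_number VF EF = k + 1"
  shows "(\<forall>\<epsilon>::real. \<epsilon> > 0 \<longrightarrow> (\<exists>n0::nat. \<forall>(V::nat set) E.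
            graph V E \<and> card V \<ge> n0 \<and> F_free VF EF V E \<longrightarrow>
            real (sum_sq_deg V E) \<le> 2 * (1 - 1 / real k + \<epsilon>) * real (num_edges E) * real (card V)))
       \<and> (k = 2 \<longrightarrow> (\<forall>(V::nat set) E. graph V E \<and> complete_bipartite V E \<longrightarrow>
            real (sum_sq_deg V E) = 2 * (1 - 1 / real k) * real (num_edges E) * real (card V)))
       \<and> (k \<ge> 3 \<longrightarrow> (\<forall>(V::nat set) E. graph V E \<and> is_turan_graph V E k \<and> k dvd card V \<longrightarrow>
            real (sum_sq_deg V E) = 2 * (1 - 1 / real k) * real (num_edges E) * real (card V)))"
proof (intro conjI allI impI)
  have k: "k \<ge> 2" using assms(1) .
  define t where "t = card VF"
  have VFne: "VF \<noteq> {}"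
  proof
    assume e: "VF = {}"
    have "colorable VF EF 0" unfolding colorable_def e by simp
    then have "chromatic_number VF EF = 0" unfolding chromatic_number_def by (rule Least_eq_0)
    then show False using assms(3) by simp
  qed
  have fVF: "finite VF" using assms(2) unfolding graph_def by auto
  have t: "t \<ge> 1" unfolding t_def using VFne fVF by (simp add: Suc_leI card_gt_0_iff)
  fix \<epsilon> :: real assume \<epsilon>: "\<epsilon> > 0"
  obtain n0 :: nat where n0: "\<forall>(V::nat set) E. finite V \<and> (\<forall>a b. E a b \<longrightarrow> E b a) \<and> (\<forall>a. \<not> E a a) \<and> card V \<ge> n0
     \<and> copies E V (Suc k) t = {} \<longrightarrow>
     real (\<Sum>v\<in>V. card (nb V E v)^2) \<le> (1 - 1/real k + \<epsilon>) * real (card V) * real (\<Sum>v\<in>V. card (nb V E v))"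
    using main[OF k t \<epsilon>] by (elim exE) (rule that)
  show "\<exists>n0::nat. \<forall>(V::nat set) E.
            graph V E \<and> card V \<ge> n0 \<and> F_free VF EF V E \<longrightarrow>
            real (sum_sq_deg V E) \<le> 2 * (1 - 1 / real k + \<epsilon>) * real (num_edges E) * real (card V)"
  proof (intro exI[of _ n0] allI impI)
    fix V :: "nat set" and E
    assume H: "graph V E \<and> card V \<ge> n0 \<and> F_free VF EF V E"
    then have gG: "graph V E" and cV: "card V \<ge> n0" and ff: "F_free VF EF V E" by auto
    have V: "finite V" and sym: "\<forall>a b. E a b \<longrightarrow> E b a" and irr: "\<forall>a. \<not> E a a"
      using gG unfolding graph_def by auto
    have free: "copies E V (Suc k) t = {}"
    proof (rule ccontr)
      assume "copies E V (Suc k) t \<noteq> {}"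
      then obtain P where "P \<in> copies E V (Suc k) t" by blast
      then have "contains_subgraph V E VF EF" using embed[OF assms(2) assms(3) gG] unfolding t_def by blast
      then show False using ff unfolding F_free_def by simp
    qed
    have main': "real (\<Sum>v\<in>V. card (nb V E v)^2) \<le> (1 - 1/real k + \<epsilon>) * real (card V) * real (\<Sum>v\<in>V. card (nb V E v))"
      using n0 V sym irr cV free by blast
    have sq: "sum_sq_deg V E = (\<Sum>v\<in>V. card (nb V E v)^2)" unfolding sum_sq_deg_def degree_nb ..
    have hs: "(\<Sum>v\<in>V. card (nb V E v)) = 2 * num_edges E" using handshake[OF gG] unfolding degree_nb by simp
    show "real (sum_sq_deg V E) \<le> 2 * (1 - 1 / real k + \<epsilon>) * real (num_edges E) * real (card V)"
      using main' unfolding sq hs by (simp add: mult_ac)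
  qed
next
  fix V :: "nat set" and E
  assume "k = 2" and "graph V E \<and> complete_bipartite V E"
  then show "real (sum_sq_deg V E) = 2 * (1 - 1 / real k) * real (num_edges E) * real (card V)"
    using bip_eq by auto
next
  fix V :: "nat set" and E
  assume "k \<ge> 3" and "graph V E \<and> is_turan_graph V E k \<and> k dvd card V"
  then show "real (sum_sq_deg V E) = 2 * (1 - 1 / real k) * real (num_edges E) * real (card V)"
    using turan_eq[of V E k] by auto
qed

end
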